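(* Let $d\in\mathbb{N}$, let $P$ be a stationary and ergodic probability measure on $\Omega=[0,1]^{\mathcal{K}^d}$, and fix an integer $0\le q<d$. For each $t\in[0,1]$ let $\widehat\beta_q(t)$ be the non-random constant such that $|\Lambda_n|^{-1}\beta_q^n(t)\to\widehat\beta_q(t)$ almost surely. Assume that for every $Q\in\mathcal{K}^d$ the function $t\mapsto P(\omega_Q\le t)$ is continuous on $[0,1]$. Let $L_q^n=\int_0^1\beta_q^n(t)\,dt$. Then $$\lim_{n\to\infty}\frac{1}{|\Lambda_n|}L_q^n=\int_0^1\widehat\beta_q(t)\,dt\quad\text{almost surely.}$$
   Context: An elementary interval is $[l,l+1]$ or $[l]=[l,l]$ with $l\in\mathbb{Z}$; an elementary cube in $\mathbb{R}^d$ is a product of $d$ elementary intervals, of dimension equal to the number of nondegenerate factors; $\mathcal{K}^d$ is the set of all elementary cubes. A cubical set is a union of elementary cubes. For a cubical set $X$, $C_k(X)$ is the free $\mathbb{Z}$-module on the $k$-dimensional elementary cubes contained in $X$ with the standard cubical boundary operator; $H_k(X)$ is the resulting homology and, for bounded $X$, $\beta_k(X)$ is the rank of the free part of $H_k(X)$. $\Omega=[0,1]^{\mathcal{K}^d}$ with product topology and Borel $\sigma$-field; $\tau_x\omega=(\omega_{-x+Q})_Q$ for $x\in\mathbb{Z}^d$; stationarity: $P\circ\tau_x^{-1}=P$ for all $x$; ergodicity: translation-invariant events have probability $0$ or $1$. $X(t)=\bigcup\{Q:\omega_Q\le t\}$, $\Lambda_n=[-n,n]^d$, $X^n(t)=X(t)\cap\Lambda_n$,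 $\beta_q^n(t)=\beta_q(X^n(t))$, $|\Lambda_n|=(2n)^d$. *)

theory Defs
  imports "HOL-Probability.Probability"
begin

text \<open>An elementary interval is encoded as a pair (l, b): b = True means [l, l+1],
  b = False means the degenerate interval [l] = [l,l].\<close>

type_synonym elint = "int \<times> bool"
type_synonym ecube = "elint list"

definition cubes :: "nat \<Rightarrow> ecube set" where
  "cubes d = {Q. length Q = d}"

definition cdim :: "ecube \<Rightarrow> nat" where
  "cdim Q = length (filter snd Q)"

definition cube_set :: "nat \<Rightarrow> ecube \<Rightarrow> real list set" where
  "cube_set d Q = {p. length p = d \<and> (\<forall>i<d. real_of_int (fst (Q!i)) \<le> p!i \<and>
       p!i \<le> real_of_int (fst (Q!i)) + (if snd (Q!i) then 1 else 0))}"

definition chains :: "nat \<Rightarrow> nat \<Rightarrow> real list set \<Rightarrow> (ecube \<Rightarrow> int) set" where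
  "chains d k X = {c. finite {Q. c Q \<noteq> 0} \<and>
      (\<forall>Q. c Q \<noteq> 0 \<longrightarrow> Q \<in> cubes d \<and> cdim Q = k \<and> cube_set d Q \<subseteq> X)}"

text \<open>Coefficient of the elementary cube P in the cubical boundary of the elementary cube Q:
  d(I x P) = dI x P + (-1)^(dim I) I x dP, with d[l,l+1] = [l+1] - [l], d[l] = 0.\<close>

definition bdcoef :: "ecube \<Rightarrow> ecube \<Rightarrow> int" where
  "bdcoef Q P = (\<Sum>i\<in>{i. i < length Q \<and> snd (Q!i)}.
      (-1) ^ card {j. j < i \<and> snd (Q!j)} *
      ((if P = Q[i := (fst (Q!i) + 1, False)] then 1 else 0)
       - (if P = Q[i := (fst (Q!i), False)] then 1 else 0)))"

definition bd :: "(ecube \<Rightarrow> int) \<Rightarrow> (ecube \<Rightarrow> int)" where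
  "bd c = (\<lambda>P. \<Sum>Q\<in>{Q. c Q \<noteq> 0}. c Q * bdcoef Q P)"

definition cycles :: "nat \<Rightarrow> nat \<Rightarrow> real list set \<Rightarrow> (ecube \<Rightarrow> int) set" where
  "cycles d k X = {c \<in> chains d k X. bd c = (\<lambda>_. 0)}"

definition boundaries :: "nat \<Rightarrow> nat \<Rightarrow> real list set \<Rightarrow> (ecube \<Rightarrow> int) set" where
  "boundaries d k X = bd ` chains d (Suc k) X"

text \<open>beta_k(X): rank of the free part of H_k(X) = Z_k/B_k, i.e. the maximal size of a
  Z-linearly independent family of homology classes.\<close>

definition betti :: "nat \<Rightarrow> nat \<Rightarrow> real list set \<Rightarrow> nat" where
  "betti d k X = Sup {card S | S. finite S \<and> S \<subseteq> cycles d k X \<and>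
      (\<forall>n :: (ecube \<Rightarrow> int) \<Rightarrow> int.
          (\<lambda>P. \<Sum>z\<in>S. n z * z P) \<in> boundaries d k X \<longrightarrow> (\<forall>z\<in>S. n z = 0))}"

definition Omega :: "nat \<Rightarrow> (ecube \<Rightarrow> real) measure" where
  "Omega d = PiM (cubes d) (\<lambda>_. restrict_space borel {0..1::real})"

definition shift_cube :: "int list \<Rightarrow> ecube \<Rightarrow> ecube" where
  "shift_cube x Q = map2 (\<lambda>(l, b) a. (l + a, b)) Q x"

definition tau :: "nat \<Rightarrow> int list \<Rightarrow> (ecube \<Rightarrow> real) \<Rightarrow> (ecube \<Rightarrow> real)" where
  "tau d x \<omega> = restrict (\<lambda>Q. \<omega> (shift_cube (map uminus x) Q)) (cubes d)"

definition stationary :: "nat \<Rightarrow> (ecube \<Rightarrow> real) measure \<Rightarrow> bool" where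
  "stationary d P \<longleftrightarrow> (\<forall>x. length x = d \<longrightarrow>
      (\<forall>A\<in>sets P. measure P (tau d x -` A \<inter> space P) = measure P A))"

definition ergodic :: "nat \<Rightarrow> (ecube \<Rightarrow> real) measure \<Rightarrow> bool" where
  "ergodic d P \<longleftrightarrow> (\<forall>A\<in>sets P.
      (\<forall>x. length x = d \<longrightarrow> tau d x -` A \<inter> space P = A) \<longrightarrow>
      measure P A = 0 \<or> measure P A = 1)"

definition Xt :: "nat \<Rightarrow> (ecube \<Rightarrow> real) \<Rightarrow> real \<Rightarrow> real list set" where
  "Xt d \<omega> t = \<Union>{cube_set d Q | Q. Q \<in> cubes d \<and> \<omega> Q \<le> t}"

definition Lam :: "nat \<Rightarrow> nat \<Rightarrow> real list set" where
  "Lam d n = {p. length p = d \<and> (\<forall>i<d. - real n \<le> p!i \<and> p!i \<le> real n)}"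

definition bettin :: "nat \<Rightarrow> nat \<Rightarrow> nat \<Rightarrow> real \<Rightarrow> (ecube \<Rightarrow> real) \<Rightarrow> nat" where
  "bettin d q n t \<omega> = betti d q (Xt d \<omega> t \<inter> Lam d n)"

end

theory Submission
  imports Defs
begin


lemma int_dep:
  fixes v :: "'i \<Rightarrow> 'k \<Rightarrow> int"
  assumes "finite K"
  shows "finite I \<Longrightarrow> (\<forall>i\<in>I. \<forall>x. x \<notin> K \<longrightarrow> v i x = 0) \<Longrightarrow> card I > card K \<Longrightarrow>
     \<exists>c. (\<exists>i\<in>I. c i \<noteq> 0) \<and> (\<forall>x. (\<Sum>i\<in>I. c i * v i x) = 0)"
  using assms
proof (induction K arbitrary: I v rule: finite_induct)
  case empty
  then obtain i0 where "i0 \<in> I" by fastforce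
  then show ?case using empty by (intro exI[of _ "\<lambda>_. 1"]) auto
next
  case (insert k K I v)
  show ?case
  proof (cases "\<forall>i\<in>I. v i k = 0")
    case True
    have "\<forall>i\<in>I. \<forall>x. x \<notin> K \<longrightarrow> v i x = 0" using True insert.prems(2) by (metis insertE)
    moreover have "card I > card K" using insert by simp
    ultimately show ?thesis using insert.IH insert.prems(1) by blast
  next
    case False
    then obtain i0 where i0: "i0 \<in> I" "v i0 k \<noteq> 0" by blast
    define I' where "I' = I - {i0}"
    define w where "w i x = v i0 k * v i x - v i k * v i0 x" for i x
    have fI': "finite I'" using insert.prems I'_def by simp
    have sw: "\<forall>i\<in>I'. \<forall>x. x \<notin> K \<longrightarrow> w i x = 0"
    proof (intro ballI allI impI)
      fix i x assume "i \<in> I'" "x \<notin> K"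
      show "w i x = 0"
      proof (cases "x = k")
        case True then show ?thesis by (simp add: w_def)
      next
        case False
        then have "x \<notin> insert k K" using \<open>x \<notin> K\<close> by simp
        then show ?thesis using insert.prems(2) \<open>i \<in> I'\<close> i0 by (simp add: w_def I'_def)
      qed
    qed
    have "card I' > card K" using insert i0 I'_def by (simp add: card_Diff_singleton)
    then obtain c' where c': "\<exists>i\<in>I'. c' i \<noteq> 0" "\<forall>x. (\<Sum>i\<in>I'. c' i * w i x) = 0"
      using insert.IH[OF fI' sw] by blast
    define c where "c i = (if i = i0 then - (\<Sum>j\<in>I'. c' j * v j k) else c' i * v i0 k)" for i
    have "\<exists>i\<in>I. c i \<noteq> 0"
    proof -
      from c'(1) obtain i1 where "i1 \<in> I'" "c' i1 \<noteq> 0" by blast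
      then show ?thesis using i0 by (intro bexI[of _ i1]) (auto simp: c_def I'_def)
    qed
    moreover have "\<forall>x. (\<Sum>i\<in>I. c i * v i x) = 0"
    proof
      fix x
      have "(\<Sum>i\<in>I. c i * v i x) = c i0 * v i0 x + (\<Sum>i\<in>I'. c i * v i x)"
        using i0 insert.prems(1) unfolding I'_def by (simp add: sum.remove)
      also have "(\<Sum>i\<in>I'. c i * v i x) = (\<Sum>i\<in>I'. c' i * v i0 k * v i x)"
        by (rule sum.cong) (auto simp: c_def I'_def)
      also have "c i0 * v i0 x = - (\<Sum>j\<in>I'. c' j * v j k * v i0 x)"
        by (simp add: c_def sum_distrib_right)
      also have "- (\<Sum>j\<in>I'. c' j * v j k * v i0 x) + (\<Sum>i\<in>I'. c' i * v i0 k * v i x)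
          = (\<Sum>i\<in>I'. c' i * w i x)"
        by (simp add: w_def sum_subtractf[symmetric] algebra_simps)
      finally show "(\<Sum>i\<in>I. c i * v i x) = 0" using c'(2) by simp
    qed
    ultimately show ?thesis by blast
  qed
qed

definition Kset :: "nat \<Rightarrow> nat \<Rightarrow> ecube set" where
  "Kset d n = {Q. Q \<in> cubes d \<and> cube_set d Q \<subseteq> Lam d n}"

lemma corner_in_cube: "Q \<in> cubes d \<Longrightarrow> map (\<lambda>e. real_of_int (fst e)) Q \<in> cube_set d Q"
  by (auto simp: cube_set_def cubes_def)

lemma real_int_bounds: "- real n \<le> real_of_int l \<Longrightarrow> real_of_int l \<le> real n \<Longrightarrow> l \<in> {- int n..int n}"
proof -
  assume a: "- real n \<le> real_of_int l" "real_of_int l \<le> real n"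
  have "real_of_int (- int n) \<le> real_of_int l" using a(1) by simp
  moreover have "real_of_int l \<le> real_of_int (int n)" using a(2) by simp
  ultimately show ?thesis by (simp only: of_int_le_iff atLeastAtMost_iff) 
qed

lemma Kset_sub: "Kset d n \<subseteq> {xs. set xs \<subseteq> {- int n..int n} \<times> UNIV \<and> length xs = d}"
proof
  fix Q assume Q: "Q \<in> Kset d n"
  then have c: "Q \<in> cubes d" and s: "cube_set d Q \<subseteq> Lam d n" by (auto simp: Kset_def)
  have len: "length Q = d" using c by (simp add: cubes_def)
  have m: "map (\<lambda>e. real_of_int (fst e)) Q \<in> Lam d n" using corner_in_cube[OF c] s by blast
  have "set Q \<subseteq> {- int n..int n} \<times> UNIV"
  proof
    fix e assume "e \<in> set Q"
    then obtain i where i: "i < length Q" "Q!i = e" by (auto simp: in_set_conv_nth)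
    have "- real n \<le> (map (\<lambda>e. real_of_int (fst e)) Q)!i \<and> (map (\<lambda>e. real_of_int (fst e)) Q)!i \<le> real n"
      using m i(1) len unfolding Lam_def mem_Collect_eq by metis
    then have "- real n \<le> real_of_int (fst e) \<and> real_of_int (fst e) \<le> real n" using i by simp
    then have "fst e \<in> {- int n..int n}" using real_int_bounds by blast
    then show "e \<in> {- int n..int n} \<times> UNIV" by (cases e) simp
  qed
  then show "Q \<in> {xs. set xs \<subseteq> {- int n..int n} \<times> UNIV \<and> length xs = d}" using len by simp
qed

lemma Kset_finite: "finite (Kset d n)"
  by (rule finite_subset[OF Kset_sub]) (simp add: finite_lists_length_eq)

lemma Kset_card: "card (Kset d n) \<le> (4 * n + 2) ^ d"
proof -
  have "card (Kset d n) \<le> card {xs. set xs \<subseteq> {- int n..int n} \<times> (UNIV::bool set) \<and> length xs = d}"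
    by (rule card_mono[OF _ Kset_sub]) (simp add: finite_lists_length_eq)
  also have "\<dots> = (card ({- int n..int n} \<times> (UNIV::bool set))) ^ d"
    by (simp add: card_lists_length_eq)
  also have "card ({- int n..int n} \<times> (UNIV::bool set)) = 4 * n + 2"
    by (simp add: card_cartesian_product)
  finally show ?thesis .
qed

lemma bd0: "bd (\<lambda>_. 0) = (\<lambda>_. 0)"
  unfolding bd_def by simp

lemma indep_card_bound:
  assumes fS: "finite S" and Sc: "S \<subseteq> cycles d q X" and XL: "X \<subseteq> Lam d n"
    and ind: "\<forall>c::(ecube\<Rightarrow>int)\<Rightarrow>int. (\<lambda>P. \<Sum>z\<in>S. c z * z P) \<in> boundaries d q X \<longrightarrow> (\<forall>z\<in>S. c z = 0)"
  shows "card S \<le> card (Kset d n)"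
proof (rule ccontr)
  assume nle: "\<not> card S \<le> card (Kset d n)"
  have supp: "\<forall>z\<in>S. \<forall>x. x \<notin> Kset d n \<longrightarrow> z x = 0"
  proof (intro ballI allI impI)
    fix z x assume zS: "z \<in> S" and xK: "x \<notin> Kset d n"
    show "z x = 0"
    proof (rule ccontr)
      assume nz: "z x \<noteq> 0"
      have "z \<in> chains d q X" using zS Sc unfolding cycles_def by blast
      then have "x \<in> cubes d \<and> cube_set d x \<subseteq> X" using nz unfolding chains_def by blast
      then have "x \<in> cubes d" "cube_set d x \<subseteq> Lam d n" using XL by auto
      then have "x \<in> Kset d n" unfolding Kset_def by simp
      then show False using xK by simp
    qed
  qed
  have "card S > card (Kset d n)" using nle by simp
  then obtain c where c: "\<exists>z\<in>S. c z \<noteq> 0" "\<forall>x. (\<Sum>z\<in>S. c z * z x) = 0"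
    using int_dep[OF Kset_finite fS supp] by blast
  have "(\<lambda>P. \<Sum>z\<in>S. c z * z P) = bd (\<lambda>_. 0)" using c(2) bd0 by simp
  moreover have "(\<lambda>_. 0) \<in> chains d (Suc q) X" by (simp add: chains_def)
  ultimately have "(\<lambda>P. \<Sum>z\<in>S. c z * z P) \<in> boundaries d q X" unfolding boundaries_def by simp
  then show False using ind c(1) by blast
qed

lemma betti_bound:
  assumes "X \<subseteq> Lam d n"
  shows "betti d q X \<le> (4 * n + 2) ^ d"
proof -
  have "betti d q X \<le> card (Kset d n)"
    unfolding betti_def
  proof (rule cSup_least)
    show "{card S | S. finite S \<and> S \<subseteq> cycles d q X \<and>
      (\<forall>n :: (ecube \<Rightarrow> int) \<Rightarrow> int.
          (\<lambda>P. \<Sum>z\<in>S. n z * z P) \<in> boundaries d q X \<longrightarrow> (\<forall>z\<in>S. n z = 0))} \<noteq> {}"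
      by (rule ex_in_conv[THEN iffD1], rule exI[of _ 0], rule CollectI, rule exI[of _ "{}"]) simp
  next
    fix s assume "s \<in> {card S | S. finite S \<and> S \<subseteq> cycles d q X \<and>
      (\<forall>n :: (ecube \<Rightarrow> int) \<Rightarrow> int.
          (\<lambda>P. \<Sum>z\<in>S. n z * z P) \<in> boundaries d q X \<longrightarrow> (\<forall>z\<in>S. n z = 0))}"
    then obtain S where S: "s = card S" "finite S" "S \<subseteq> cycles d q X"
      "\<forall>c::(ecube\<Rightarrow>int)\<Rightarrow>int. (\<lambda>P. \<Sum>z\<in>S. c z * z P) \<in> boundaries d q X \<longrightarrow> (\<forall>z\<in>S. c z = 0)"
      by auto
    show "s \<le> card (Kset d n)" unfolding S(1) by (rule indep_card_bound[OF S(2) S(3) assms S(4)])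
  qed
  then show ?thesis using Kset_card order_trans by blast
qed



definition Nset :: "nat \<Rightarrow> nat \<Rightarrow> ecube set" where
  "Nset d n = {Q. Q \<in> cubes d \<and> cube_set d Q \<inter> Lam d n \<noteq> {}}"

lemma real_int_bounds2: "- real n \<le> real_of_int l + 1 \<Longrightarrow> real_of_int l \<le> real n \<Longrightarrow> l \<in> {- int n - 1..int n}"
proof -
  assume a: "- real n \<le> real_of_int l + 1" "real_of_int l \<le> real n"
  have "real_of_int (- int n - 1) \<le> real_of_int l" using a(1) by simp
  moreover have "real_of_int l \<le> real_of_int (int n)" using a(2) by simp
  ultimately show ?thesis by (simp only: of_int_le_iff atLeastAtMost_iff)
qed

lemma Nset_sub: "Nset d n \<subseteq> {xs. set xs \<subseteq> {- int n - 1..int n} \<times> UNIV \<and> length xs = d}"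
proof
  fix Q assume Q: "Q \<in> Nset d n"
  then have c: "Q \<in> cubes d" unfolding Nset_def by blast
  from Q obtain p where p: "p \<in> cube_set d Q" "p \<in> Lam d n" unfolding Nset_def by blast
  have len: "length Q = d" using c by (simp add: cubes_def)
  have "set Q \<subseteq> {- int n - 1..int n} \<times> UNIV"
  proof
    fix e assume "e \<in> set Q"
    then obtain i where i: "i < length Q" "Q!i = e" by (auto simp: in_set_conv_nth)
    have "- real n \<le> p!i \<and> p!i \<le> real n" using p(2) i(1) len unfolding Lam_def mem_Collect_eq by metis
    moreover have "real_of_int (fst (Q!i)) \<le> p!i \<and> p!i \<le> real_of_int (fst (Q!i)) + (if snd (Q!i) then 1 else 0)"
      using p(1) i(1) len unfolding cube_set_def mem_Collect_eq by metis
    ultimately have "- real n \<le> real_of_int (fst e) + 1 \<and> real_of_int (fst e) \<le> real n"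
      using i(2) by (auto split: if_splits)
    then have "fst e \<in> {- int n - 1..int n}" using real_int_bounds2 by blast
    then show "e \<in> {- int n - 1..int n} \<times> UNIV" by (cases e) simp
  qed
  then show "Q \<in> {xs. set xs \<subseteq> {- int n - 1..int n} \<times> UNIV \<and> length xs = d}" using len by simp
qed

lemma Nset_finite: "finite (Nset d n)"
  by (rule finite_subset[OF Nset_sub]) (simp add: finite_lists_length_eq)

definition Gb :: "nat \<Rightarrow> nat \<Rightarrow> nat \<Rightarrow> ecube set \<Rightarrow> nat" where
  "Gb d q n A = betti d q (\<Union>{cube_set d Q | Q. Q \<in> A} \<inter> Lam d n)"

lemma Xt_restrict: "Xt d \<omega> t \<inter> Lam d n = \<Union>{cube_set d Q | Q. Q \<in> {Q \<in> Nset d n. \<omega> Q \<le> t}} \<inter> Lam d n"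
  unfolding Xt_def Nset_def by blast

lemma bettin_Gb: "bettin d q n t \<omega> = Gb d q n {Q \<in> Nset d n. \<omega> Q \<le> t}"
  unfolding bettin_def Gb_def Xt_restrict ..

lemma comp_meas:
  assumes "sets P = sets (Omega d)" "Q \<in> cubes d"
  shows "(\<lambda>\<omega>. \<omega> Q) \<in> borel_measurable P"
proof -
  have "(\<lambda>\<omega>. \<omega> Q) \<in> measurable (Omega d) (restrict_space borel {0..1::real})"
    unfolding Omega_def using assms(2) by (rule measurable_component_singleton)
  moreover have "(\<lambda>x. x) \<in> measurable (restrict_space borel {0..1::real}) borel"
    by (rule measurable_restrict_space1) simp
  ultimately have "(\<lambda>\<omega>. \<omega> Q) \<in> borel_measurable (Omega d)"
    using measurable_compose by blast
  then show ?thesis by (subst measurable_cong_sets[OF assms(1) refl])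
qed

lemma key_eq: "a \<subseteq> N \<Longrightarrow> ({Q \<in> N. g Q \<le> (t::real)} = a) \<longleftrightarrow> (\<forall>Q\<in>N. (Q \<in> a \<longleftrightarrow> g Q \<le> t))"
  by (auto simp: set_eq_iff)

lemma bettin_meas:
  assumes sP: "sets P = sets (Omega d)"
  shows "(\<lambda>x. real (bettin d q n (fst x) (snd x))) \<in> borel_measurable (lborel \<Otimes>\<^sub>M P)"
proof -
  let ?N = "Nset d n"
  define F where "F x = {Q \<in> ?N. snd x Q \<le> fst x}" for x :: "real \<times> (ecube \<Rightarrow> real)"
  have "F \<in> measurable (lborel \<Otimes>\<^sub>M P) (count_space (Pow ?N))"
  proof (subst measurable_count_space_eq2, simp add: Nset_finite, intro conjI ballI)
    show "F \<in> space (lborel \<Otimes>\<^sub>M P) \<rightarrow> Pow ?N" by (auto simp: F_def)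
  next
    fix a assume a: "a \<in> Pow ?N"
    have "{x \<in> space (lborel \<Otimes>\<^sub>M P). \<forall>Q\<in>?N. (Q \<in> a \<longleftrightarrow> snd x Q \<le> fst x)} \<in> sets (lborel \<Otimes>\<^sub>M P)"
    proof (rule sets.sets_Collect_finite_All[OF _ Nset_finite])
      fix Q assume "Q \<in> ?N"
      then have "Q \<in> cubes d" unfolding Nset_def by blast
      then have [measurable]: "(\<lambda>\<omega>. \<omega> Q) \<in> borel_measurable P" by (rule comp_meas[OF sP])
      show "{x \<in> space (lborel \<Otimes>\<^sub>M P). (Q \<in> a \<longleftrightarrow> snd x Q \<le> fst x)} \<in> sets (lborel \<Otimes>\<^sub>M P)" by measurable
    qed
    moreover have "F -` {a} \<inter> space (lborel \<Otimes>\<^sub>M P) =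
        {x \<in> space (lborel \<Otimes>\<^sub>M P). \<forall>Q\<in>?N. (Q \<in> a \<longleftrightarrow> snd x Q \<le> fst x)}"
    proof -
      have a': "a \<subseteq> ?N" using a by simp
      have "F -` {a} \<inter> space (lborel \<Otimes>\<^sub>M P) = {x \<in> space (lborel \<Otimes>\<^sub>M P). F x = a}" by (simp add: vimage_def Int_def conj_commute)
      also have "\<dots> = {x \<in> space (lborel \<Otimes>\<^sub>M P). \<forall>Q\<in>?N. (Q \<in> a \<longleftrightarrow> snd x Q \<le> fst x)}"
        unfolding F_def using key_eq[OF a'] by simp
      finally show ?thesis .
    qed
    ultimately show "F -` {a} \<inter> space (lborel \<Otimes>\<^sub>M P) \<in> sets (lborel \<Otimes>\<^sub>M P)"
      by simp
  qed
  moreover have "(\<lambda>A. real (Gb d q n A)) \<in> borel_measurable (count_space (Pow ?N))"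
    by simp
  ultimately have "(\<lambda>x. real (Gb d q n (F x))) \<in> borel_measurable (lborel \<Otimes>\<^sub>M P)"
    by (rule measurable_compose)
  moreover have "(\<lambda>x. real (bettin d q n (fst x) (snd x))) = (\<lambda>x. real (Gb d q n (F x)))"
    by (simp add: bettin_Gb F_def)
  ultimately show ?thesis by simp
qed



lemma conv_iff: "(X \<longlonglongrightarrow> (c::real)) \<longleftrightarrow> Cauchy X \<and> lim X = c"
  using Cauchy_convergent_iff convergent_LIMSEQ_iff limI convergentI by metis

lemma I01: "(LBINT t=0..1. g t) = integral\<^sup>L lborel (\<lambda>t. indicator {0..1::real} t *\<^sub>R g t)"
  using interval_integral_Icc[of 0 1 g] by (simp add: zero_ereal_def one_ereal_def set_lebesgue_integral_def)

lemma bound_f: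
  assumes "0 < d"
  shows "0 \<le> real (bettin d q n t \<omega>) / (2 * real n) ^ d \<and> real (bettin d q n t \<omega>) / (2 * real n) ^ d \<le> 3 ^ d"
proof (cases "n = 0")
  case True then show ?thesis using assms by (simp add: zero_power)
next
  case False
  have b: "real (bettin d q n t \<omega>) \<le> real ((4 * n + 2) ^ d)"
    unfolding bettin_def by (subst of_nat_le_iff) (rule betti_bound, blast)
  have pos: "0 < (2 * real n) ^ d" using False by simp
  have "real (bettin d q n t \<omega>) / (2 * real n) ^ d \<le> real ((4 * n + 2) ^ d) / (2 * real n) ^ d"
    using b pos by (simp add: divide_right_mono)
  also have "\<dots> = ((4 * real n + 2) / (2 * real n)) ^ d" by (simp add: power_divide add.commute)
  also have "\<dots> \<le> 3 ^ d"
  proof (rule power_mono)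
    have "4 * real n + 2 \<le> 3 * (2 * real n)" using False by simp
    then show "(4 * real n + 2) / (2 * real n) \<le> 3" using False by (simp add: divide_le_eq)
  qed simp
  finally show ?thesis using pos by simp
qed



theorem corollary2p10:
  fixes d q :: nat and P :: "(ecube \<Rightarrow> real) measure" and bhat :: "real \<Rightarrow> real"
  assumes "prob_space P"
    and "sets P = sets (Omega d)"
    and "stationary d P"
    and "ergodic d P"
    and "q < d"
    and "\<forall>t\<in>{0..1}. AE \<omega> in P.
           (\<lambda>n. real (bettin d q n t \<omega>) / (2 * real n) ^ d) \<longlonglongrightarrow> bhat t"
    and "\<forall>Q\<in>cubes d. continuous_on {0..1} (\<lambda>t. measure P {\<omega> \<in> space P. \<omega> Q \<le> t})"
  shows "AE \<omega> in P.
           (\<lambda>n. (LBINT t=0..1. real (bettin d q n t \<omega>)) / (2 * real n) ^ d)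
             \<longlonglongrightarrow> (LBINT t=0..1. bhat t)"
proof -
  interpret P: prob_space P by fact
  interpret PS: pair_sigma_finite lborel P
    by (intro pair_sigma_finite.intro lborel.sigma_finite_measure_axioms P.sigma_finite_measure_axioms)
  have d0: "0 < d" using assms(5) by simp
  define f where "f n t \<omega> = real (bettin d q n t \<omega>) / (2 * real n) ^ d" for n t \<omega>
  have bm[measurable]: "(\<lambda>x. real (bettin d q n (fst x) (snd x))) \<in> borel_measurable (lborel \<Otimes>\<^sub>M P)" for n
    by (rule bettin_meas[OF assms(2)])
  have fm[measurable]: "(\<lambda>x. f n (fst x) (snd x)) \<in> borel_measurable (lborel \<Otimes>\<^sub>M P)" for n
    unfolding f_def by measurable
  have bnd: "0 \<le> f n t \<omega> \<and> f n t \<omega> \<le> 3 ^ d" for n t \<omega>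
    unfolding f_def by (rule bound_f[OF d0])
  define L where "L x = lim (\<lambda>n. f n (fst x) (snd x))" for x
  have Lm[measurable]: "L \<in> borel_measurable (lborel \<Otimes>\<^sub>M P)"
    unfolding L_def by measurable
  define h where "h t = (\<integral>\<omega>. L (t, \<omega>) \<partial>P)" for t
  have hm[measurable]: "h \<in> borel_measurable lborel"
    unfolding h_def by (rule P.borel_measurable_lebesgue_integral) (simp add: case_prod_eta)
  have hb: "h t = bhat t" if t: "t \<in> {0..1}" for t
  proof -
    have ae: "AE \<omega> in P. (\<lambda>n. f n t \<omega>) \<longlonglongrightarrow> bhat t"
      using assms(6) t unfolding f_def by blast
    have "AE \<omega> in P. L (t, \<omega>) = bhat t"
      using ae by eventually_elim (simp add: L_def limI)
    then have "h t = (\<integral>\<omega>. bhat t \<partial>P)"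
      unfolding h_def by (intro integral_cong_AE) measurable
    then show ?thesis by (simp add: P.prob_space)
  qed
  have setm: "{x \<in> space (lborel \<Otimes>\<^sub>M P). fst x \<in> {0..1} \<longrightarrow> (\<lambda>n. f n (fst x) (snd x)) \<longlonglongrightarrow> h (fst x)}
      \<in> sets (lborel \<Otimes>\<^sub>M P)"
  proof -
    have "{x \<in> space (lborel \<Otimes>\<^sub>M P). fst x \<in> {0..1} \<longrightarrow> (\<lambda>n. f n (fst x) (snd x)) \<longlonglongrightarrow> h (fst x)}
      = {x \<in> space (lborel \<Otimes>\<^sub>M P). fst x \<in> {0..1} \<longrightarrow> Cauchy (\<lambda>n. f n (fst x) (snd x)) \<and> L x = h (fst x)}"
      by (simp add: conv_iff L_def)
    also have "\<dots> \<in> sets (lborel \<Otimes>\<^sub>M P)" by measurable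
    finally show ?thesis .
  qed
  have ae1: "AE t in lborel. AE \<omega> in P. (t \<in> {0..1} \<longrightarrow> (\<lambda>n. f n t \<omega>) \<longlonglongrightarrow> h t)"
  proof (rule AE_I2)
    fix t
    show "AE \<omega> in P. (t \<in> {0..1} \<longrightarrow> (\<lambda>n. f n t \<omega>) \<longlonglongrightarrow> h t)"
    proof (cases "t \<in> {0..1}")
      case True
      then have "AE \<omega> in P. (\<lambda>n. f n t \<omega>) \<longlonglongrightarrow> bhat t" using assms(6) unfolding f_def by blast
      then show ?thesis using hb[OF True] by simp
    next
      case False
      show ?thesis by (rule AE_I2) (use False in blast)
    qed
  qed
  have ae2: "AE \<omega> in P. AE t in lborel. (t \<in> {0..1} \<longrightarrow> (\<lambda>n. f n t \<omega>) \<longlonglongrightarrow> h t)"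
    using ae1 PS.AE_commute[where P="\<lambda>t \<omega>. t \<in> {0..1} \<longrightarrow> (\<lambda>n. f n t \<omega>) \<longlonglongrightarrow> h t", OF setm] by simp
  show ?thesis
    using AE_space ae2
  proof eventually_elim
    case (elim \<omega>)
    have fmt[measurable]: "(\<lambda>t. f i t \<omega>) \<in> borel_measurable lborel" for i
      using measurable_compose[OF measurable_Pair2'[OF elim(1)] fm[of i]] by simp
    have lhs: "(LBINT t=0..1. real (bettin d q n t \<omega>)) / (2 * real n) ^ d
        = integral\<^sup>L lborel (\<lambda>t. indicator {0..1} t *\<^sub>R f n t \<omega>)" for n
      unfolding I01 f_def by simp
    have rhs: "(LBINT t=0..1. bhat t) = integral\<^sup>L lborel (\<lambda>t. indicator {0..1} t *\<^sub>R h t)"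
      unfolding I01 by (rule Bochner_Integration.integral_cong[OF refl]) (simp add: hb indicator_def)
    have "(\<lambda>n. integral\<^sup>L lborel (\<lambda>t. indicator {0..1} t *\<^sub>R f n t \<omega>))
        \<longlonglongrightarrow> integral\<^sup>L lborel (\<lambda>t. indicator {0..1} t *\<^sub>R h t)"
    proof (rule integral_dominated_convergence[where w="\<lambda>t. 3 ^ d * indicator {0..1::real} t"])
      show "(\<lambda>t. indicator {0..1} t *\<^sub>R h t) \<in> borel_measurable lborel" by measurable
      show "(\<lambda>t. indicator {0..1} t *\<^sub>R f i t \<omega>) \<in> borel_measurable lborel" for i by measurable
      show "integrable lborel (\<lambda>t. (3::real) ^ d * indicator {0..1::real} t)"
        by (intro integrable_mult_right integrable_real_indicator) auto
      show "AE t in lborel. (\<lambda>i. indicator {0..1} t *\<^sub>R f i t \<omega>) \<longlonglongrightarrow> indicator {0..1} t *\<^sub>R h t"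
        using elim(2)
      proof eventually_elim
        case (elim t)
        then show ?case by (cases "t \<in> {0..1}") auto
      qed
      show "AE t in lborel. norm (indicator {0..1} t *\<^sub>R f i t \<omega>) \<le> 3 ^ d * indicator {0..1::real} t" for i
      proof (rule AE_I2)
        fix t
        show "norm (indicator {0..1} t *\<^sub>R f i t \<omega>) \<le> 3 ^ d * indicator {0..1::real} t"
          using bnd[of i t \<omega>] by (cases "t \<in> {0..1}") auto
      qed
    qed
    then show ?case using lhs rhs by simp
  qed
qed


end
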